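(* For all integers $n,k$ with $1\le k\le n-1$, $\Gamma_{\times k,t}(K_n\times K_2)=2k+2$.
   Context: For an integer $k\ge1$ and a graph $G$ with $\delta(G)\ge k$, a set $S\subseteq V(G)$ is a $k$-tuple total dominating set ($k$TDS) if $|N_G(x)\cap S|\ge k$ for every $x\in V(G)$, and $\Gamma_{\times k,t}(G)$ is the maximum cardinality of a minimal (with respect to inclusion) $k$TDS of $G$. The cross (direct) product $G\times H$ has vertex set $V(G)\times V(H)$, with $(g_1,h_1)\sim(g_2,h_2)$ iff $g_1g_2\in E(G)$ and $h_1h_2\in E(H)$. *)

theory Defs
  imports Main
begin

text \<open>A finite simple graph is represented by a vertex set V and a symmetric,
irreflexive adjacency predicate E on V.\<close>

definition open_nbhd :: "'a set \<Rightarrow> ('a \<Rightarrow> 'a \<Rightarrow> bool) \<Rightarrow> 'a \<Rightarrow> 'a set" where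
  "open_nbhd V E x = {y \<in> V. E x y}"

definition is_kTDS :: "nat \<Rightarrow> 'a set \<Rightarrow> ('a \<Rightarrow> 'a \<Rightarrow> bool) \<Rightarrow> 'a set \<Rightarrow> bool" where
  "is_kTDS k V E S \<longleftrightarrow> S \<subseteq> V \<and> (\<forall>x\<in>V. card (open_nbhd V E x \<inter> S) \<ge> k)"

definition is_minimal_kTDS :: "nat \<Rightarrow> 'a set \<Rightarrow> ('a \<Rightarrow> 'a \<Rightarrow> bool) \<Rightarrow> 'a set \<Rightarrow> bool" where
  "is_minimal_kTDS k V E S \<longleftrightarrow> is_kTDS k V E S \<and> (\<forall>T. T \<subset> S \<longrightarrow> \<not> is_kTDS k V E T)"

definition upper_ktuple_tdom :: "nat \<Rightarrow> 'a set \<Rightarrow> ('a \<Rightarrow> 'a \<Rightarrow> bool) \<Rightarrow> nat" where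
  "upper_ktuple_tdom k V E = Max {card S | S. is_minimal_kTDS k V E S}"

definition K_verts :: "nat \<Rightarrow> nat set" where "K_verts n = {0..<n}"
definition K_adj :: "nat \<Rightarrow> nat \<Rightarrow> bool" where "K_adj a b \<longleftrightarrow> a \<noteq> b"

definition cross_verts :: "'a set \<Rightarrow> 'b set \<Rightarrow> ('a \<times> 'b) set" where
  "cross_verts V W = V \<times> W"
definition cross_adj :: "('a \<Rightarrow> 'a \<Rightarrow> bool) \<Rightarrow> ('b \<Rightarrow> 'b \<Rightarrow> bool) \<Rightarrow> 'a \<times> 'b \<Rightarrow> 'a \<times> 'b \<Rightarrow> bool" where
  "cross_adj E F p q \<longleftrightarrow> E (fst p) (fst q) \<and> F (snd p) (snd q)"

end

theory Submission
  imports Defs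
begin

abbreviation "VV (n::nat) \<equiv> {0..<n} \<times> {0..<(2::nat)}"
abbreviation "EE \<equiv> cross_adj K_adj K_adj"

lemma nb_card:
  assumes "S \<subseteq> VV n" "b < 2" "i < n"
  shows "card (open_nbhd (VV n) EE (i,b) \<inter> S) = card ({j. (j,1-b)\<in>S} - {i})"
proof -
  have "open_nbhd (VV n) EE (i,b) \<inter> S = (\<lambda>j. (j,1-b)) ` ({j. (j,1-b)\<in>S} - {i})"
  proof
    show "open_nbhd (VV n) EE (i,b) \<inter> S \<subseteq> (\<lambda>j. (j,1-b)) ` ({j. (j,1-b)\<in>S} - {i})"
    proof
      fix x assume x: "x \<in> open_nbhd (VV n) EE (i,b) \<inter> S"
      obtain j c where xe: "x = (j,c)" by fastforce
      have "c < 2" "c \<noteq> b" "j \<noteq> i" "(j,c) \<in> S"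
        using x xe unfolding open_nbhd_def cross_adj_def K_adj_def by auto
      then have "c = 1 - b" using assms(2) by auto
      then show "x \<in> (\<lambda>j. (j,1-b)) ` ({j. (j,1-b)\<in>S} - {i})"
        using xe \<open>j \<noteq> i\<close> \<open>(j,c)\<in>S\<close> by auto
    qed
  next
    have "1 - b \<noteq> b" using assms(2) by arith
    then show "(\<lambda>j. (j,1-b)) ` ({j. (j,1-b)\<in>S} - {i}) \<subseteq> open_nbhd (VV n) EE (i,b) \<inter> S"
      using assms unfolding open_nbhd_def cross_adj_def K_adj_def by auto
  qed
  then show ?thesis by (simp add: card_image inj_on_def)
qed

lemma cnt:
  fixes n :: nat
  assumes "X \<subseteq> {0..<n}" "1 \<le> k" "0 < n"
  shows "(\<forall>i<n. k \<le> card (X - {i})) \<longleftrightarrow> k+1 \<le> card X"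
proof
  assume H: "\<forall>i<n. k \<le> card (X - {i})"
  have fin: "finite X" by (rule finite_subset[OF assms(1)]) simp
  show "k+1 \<le> card X"
  proof (cases "X = {}")
    case True
    have "k \<le> card (X - {0})" using H assms(3) by blast
    then show ?thesis using True assms(2) by simp
  next
    case False
    then obtain i where i: "i \<in> X" by auto
    then have "i < n" using assms(1) by auto
    then have "k \<le> card (X - {i})" using H by blast
    moreover have "card X = Suc (card (X - {i}))" using card.remove[OF fin i] .
    ultimately show ?thesis by linarith
  qed
next
  assume "k+1 \<le> card X"
  then show "\<forall>i<n. k \<le> card (X - {i})"
  proof (intro allI impI)
    fix i assume "i < n"
    have "card X - 1 \<le> card (X - {i})" by (cases "i \<in> X") (simp_all add: card_Diff_singleton)
    then show "k \<le> card (X - {i})" using \<open>k+1 \<le> card X\<close> by linarith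
  qed
qed

lemma kTDS_iff:
  assumes "S \<subseteq> VV n" "1 \<le> k" "0 < n"
  shows "is_kTDS k (VV n) EE S \<longleftrightarrow> k+1 \<le> card {j. (j,0)\<in>S} \<and> k+1 \<le> card {j. (j,1)\<in>S}"
proof -
  have s0: "{j. (j,0)\<in>S} \<subseteq> {0..<n}" "{j. (j,1)\<in>S} \<subseteq> {0..<n}" using assms(1) by auto
  have "is_kTDS k (VV n) EE S \<longleftrightarrow> (\<forall>i<n. \<forall>b<2. k \<le> card ({j. (j,1-b)\<in>S} - {i}))"
    unfolding is_kTDS_def using assms(1) nb_card[OF assms(1)] by auto
  also have "\<dots> \<longleftrightarrow> (\<forall>i<n. k \<le> card ({j. (j,1)\<in>S} - {i})) \<and> (\<forall>i<n. k \<le> card ({j. (j,0)\<in>S} - {i}))"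
  proof
    assume A: "\<forall>i<n. \<forall>b<2. k \<le> card ({j. (j,1-b)\<in>S} - {i})"
    have h1: "\<forall>i<n. k \<le> card ({j. (j,1)\<in>S} - {i})"
    proof (intro allI impI)
      fix i assume i: "i<n"
      show "k \<le> card ({j. (j,1)\<in>S} - {i})" using A[rule_format, OF i, of 0] by simp
    qed
    have h2: "\<forall>i<n. k \<le> card ({j. (j,0)\<in>S} - {i})"
    proof (intro allI impI)
      fix i assume i: "i<n"
      show "k \<le> card ({j. (j,0)\<in>S} - {i})" using A[rule_format, OF i, of 1] by simp
    qed
    show "(\<forall>i<n. k \<le> card ({j. (j,1)\<in>S} - {i})) \<and> (\<forall>i<n. k \<le> card ({j. (j,0)\<in>S} - {i}))"
      using h1 h2 by (rule conjI)
  next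
    assume B: "(\<forall>i<n. k \<le> card ({j. (j,1)\<in>S} - {i})) \<and> (\<forall>i<n. k \<le> card ({j. (j,0)\<in>S} - {i}))"
    show "\<forall>i<n. \<forall>b<2. k \<le> card ({j. (j,1-b)\<in>S} - {i})"
    proof (intro allI impI)
      fix i b :: nat assume i: "i<n" and b: "b<2"
      then have "b = 0 \<or> b = 1" by auto
      then show "k \<le> card ({j. (j,1-b)\<in>S} - {i})" using B i by auto
    qed
  qed
  also have "\<dots> \<longleftrightarrow> k+1 \<le> card {j. (j,0)\<in>S} \<and> k+1 \<le> card {j. (j,1)\<in>S}"
    by (simp only: cnt[OF s0(1) assms(2,3)] cnt[OF s0(2) assms(2,3)] conj_commute)
  finally show ?thesis .
qed

lemma card_split:
  assumes "S \<subseteq> VV n"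
  shows "card S = card {j. (j,0)\<in>S} + card {j. (j,1)\<in>S}"
proof -
  have fin: "finite {j. (j,0)\<in>S}" "finite {j. (j,1)\<in>S}"
  proof -
    have a: "{j. (j,0)\<in>S} \<subseteq> {0..<n}" "{j. (j,1)\<in>S} \<subseteq> {0..<n}" using assms by auto
    show "finite {j. (j,0)\<in>S}" "finite {j. (j,1)\<in>S}" using finite_subset[OF a(1)] finite_subset[OF a(2)] by simp_all
  qed
  have "S = (\<lambda>j. (j,0::nat)) ` {j. (j,0)\<in>S} \<union> (\<lambda>j. (j,1)) ` {j. (j,1)\<in>S}"
  proof
    show "S \<subseteq> (\<lambda>j. (j,0::nat)) ` {j. (j,0)\<in>S} \<union> (\<lambda>j. (j,1)) ` {j. (j,1)\<in>S}"
    proof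
      fix x assume x: "x \<in> S"
      obtain j c where xe: "x = (j,c)" by fastforce
      then have "c < 2" using x assms by auto
      then have "c = 0 \<or> c = 1" by auto
      then show "x \<in> (\<lambda>j. (j,0::nat)) ` {j. (j,0)\<in>S} \<union> (\<lambda>j. (j,1)) ` {j. (j,1)\<in>S}"
        using x xe by auto
    qed
  qed auto
  then have "card S = card ((\<lambda>j. (j,0::nat)) ` {j. (j,0)\<in>S} \<union> (\<lambda>j. (j,1)) ` {j. (j,1)\<in>S})"
    by simp
  also have "\<dots> = card ((\<lambda>j. (j,0::nat)) ` {j. (j,0)\<in>S}) + card ((\<lambda>j. (j,1::nat)) ` {j. (j,1)\<in>S})"
    by (rule card_Un_disjoint) (use fin in auto)
  also have "\<dots> = card {j. (j,0)\<in>S} + card {j. (j,1)\<in>S}"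
    by (simp add: card_image inj_on_def)
  finally show ?thesis .
qed

theorem mainTheorem15:
  fixes n k :: nat
  assumes "1 \<le> k" and "k \<le> n - 1"
  shows "upper_ktuple_tdom k (cross_verts (K_verts n) (K_verts 2)) (cross_adj K_adj K_adj) = 2 * k + 2"
proof -
  have n0: "0 < n" using assms by linarith
  have V: "cross_verts (K_verts n) (K_verts 2) = VV n" by (simp add: cross_verts_def K_verts_def)
  have all: "card S = 2*k+2" if m: "is_minimal_kTDS k (VV n) EE S" for S
  proof -
    have t: "is_kTDS k (VV n) EE S" and sub: "S \<subseteq> VV n" using m unfolding is_minimal_kTDS_def is_kTDS_def by auto
    have c: "k+1 \<le> card {j. (j,0)\<in>S}" "k+1 \<le> card {j. (j,1)\<in>S}"
      using kTDS_iff[OF sub assms(1) n0] t by auto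
    have fin: "finite {j. (j,0)\<in>S}" "finite {j. (j,1)\<in>S}"
    proof -
      have a: "{j. (j,0)\<in>S} \<subseteq> {0..<n}" "{j. (j,1)\<in>S} \<subseteq> {0..<n}" using sub by auto
      show "finite {j. (j,0)\<in>S}" "finite {j. (j,1)\<in>S}" using finite_subset[OF a(1)] finite_subset[OF a(2)] by simp_all
    qed
    have e: "card {j. (j,c)\<in>S} = k+1" if c01: "c = 0 \<or> c = (1::nat)" for c
    proof (rule ccontr)
      assume ne: "card {j. (j,c)\<in>S} \<noteq> k+1"
      have fc: "finite {j. (j,c)\<in>S}" using fin c01 by auto
      have gt: "card {j. (j,c)\<in>S} > k+1" using ne c c01 by force
      then obtain a where a: "(a,c) \<in> S" by (metis (mono_tags, lifting) card.empty empty_iff mem_Collect_eq not_less_zero equals0I)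
      define T where "T = S - {(a,c)}"
      have Tsub: "T \<subseteq> VV n" using sub T_def by auto
      have Tss: "T \<subset> S" using a T_def by auto
      have "{j. (j,c)\<in>T} = {j. (j,c)\<in>S} - {a}" unfolding T_def by auto
      then have cT: "card {j. (j,c)\<in>T} = card {j. (j,c)\<in>S} - 1" using a fc by simp
      have oth: "{j. (j,1-c)\<in>T} = {j. (j,1-c)\<in>S}" unfolding T_def using c01 by auto
      have "is_kTDS k (VV n) EE T"
        using kTDS_iff[OF Tsub assms(1) n0] c01 cT gt oth c by auto
      then show False using m Tss unfolding is_minimal_kTDS_def by blast
    qed
    show ?thesis using card_split[OF sub] e[of 0] e[of 1] by simp
  qed
  define S0 where "S0 = {0..<k+1} \<times> {0..<(2::nat)}"
  have S0sub: "S0 \<subseteq> VV n" unfolding S0_def using assms by auto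
  have sl: "{j. (j,c)\<in>S0} = {0..<k+1}" if "c < 2" for c using that unfolding S0_def by auto
  have S0t: "is_kTDS k (VV n) EE S0" using kTDS_iff[OF S0sub assms(1) n0] sl[of 0] sl[of 1] by simp
  have cS0: "card S0 = 2*k+2" unfolding S0_def by (simp add: card_cartesian_product)
  have S0m: "is_minimal_kTDS k (VV n) EE S0"
    unfolding is_minimal_kTDS_def
  proof (intro conjI allI impI S0t)
    fix T assume Tss: "T \<subset> S0"
    show "\<not> is_kTDS k (VV n) EE T"
    proof
      assume tT: "is_kTDS k (VV n) EE T"
      have Tsub: "T \<subseteq> VV n" using Tss S0sub by auto
      have "card T \<ge> 2*k+2" using kTDS_iff[OF Tsub assms(1) n0] tT card_split[OF Tsub] by simp
      moreover have "finite S0" unfolding S0_def by simp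
      then have "card T < card S0" using Tss psubset_card_mono by blast
      ultimately show False using cS0 by simp
    qed
  qed
  have "{card S | S. is_minimal_kTDS k (VV n) EE S} = {2*k+2}"
  proof
    show "{card S | S. is_minimal_kTDS k (VV n) EE S} \<subseteq> {2*k+2}" using all by auto
    show "{2*k+2} \<subseteq> {card S | S. is_minimal_kTDS k (VV n) EE S}" proof
      fix x assume "x \<in> {2*k+2}"
      then have "x = card S0" using cS0 by simp
      then show "x \<in> {card S | S. is_minimal_kTDS k (VV n) EE S}" using S0m by blast
    qed
  qed
  then show ?thesis unfolding upper_ktuple_tdom_def V by simp
qed

end
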